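(* Let $G=(V,E)$ be a finite unweighted undirected graph with no isolated nodes, let $g\ge 2$ be an integer and $Q\ge 1$. Suppose $S_1,\dots,S_Q\subset V$ are pairwise disjoint $g$-dangling sets, and let $S_0=V\setminus\bigcup_{l=1}^Q S_l$ satisfy $\mathrm{vol}(S_0,G)\ge 4g^2$. Then the normalized Laplacian $L=I-D^{-1/2}AD^{-1/2}$ of $G$ has at least $Q/2$ eigenvalues (counted with multiplicity) that are strictly smaller than $(g-1)^{-1}$.
   Context: $A$ is the adjacency matrix of $G$ ($A_{ij}=1$ if $\{i,j\}\in E$, else $0$), $d_i=\sum_j A_{ij}$ is the degree of node $i$, $D=\mathrm{diag}(d_1,\dots,d_N)$, and for $S\subset V$, $\mathrm{vol}(S,G)=\sum_{i\in S}d_i$. A subset $S\subset V$ is called $g$-dangling if: (i) $|S|=g$; (ii) the node-induced subgraph on $S$ has exactly $g-1$ edges and contains no cycle (i.e., it is a tree); (iii) there is exactly one edge of $G$ with one endpoint in $S$ and the other in $V\setminus S$. *)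

theory Defs
  imports "Jordan_Normal_Form.Char_Poly"
begin

definition simple_graph :: "nat \<Rightarrow> (nat \<Rightarrow> nat \<Rightarrow> bool) \<Rightarrow> bool" where
  "simple_graph n E \<longleftrightarrow> (\<forall>i j. E i j \<longrightarrow> i < n \<and> j < n) \<and> (\<forall>i j. E i j \<longrightarrow> E j i) \<and> (\<forall>i. \<not> E i i)"

definition adj_matrix :: "nat \<Rightarrow> (nat \<Rightarrow> nat \<Rightarrow> bool) \<Rightarrow> real mat" where
  "adj_matrix n E = mat n n (\<lambda>(i,j). if E i j then 1 else 0)"

definition degree :: "nat \<Rightarrow> (nat \<Rightarrow> nat \<Rightarrow> bool) \<Rightarrow> nat \<Rightarrow> real" where
  "degree n E i = (\<Sum>j<n. adj_matrix n E $$ (i,j))"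

definition vol :: "nat \<Rightarrow> (nat \<Rightarrow> nat \<Rightarrow> bool) \<Rightarrow> nat set \<Rightarrow> real" where
  "vol n E S = (\<Sum>i\<in>S. degree n E i)"

definition deg_inv_sqrt :: "nat \<Rightarrow> (nat \<Rightarrow> nat \<Rightarrow> bool) \<Rightarrow> real mat" where
  "deg_inv_sqrt n E = mat n n (\<lambda>(i,j). if i = j then 1 / sqrt (degree n E i) else 0)"

definition norm_laplacian :: "nat \<Rightarrow> (nat \<Rightarrow> nat \<Rightarrow> bool) \<Rightarrow> real mat" where
  "norm_laplacian n E = 1\<^sub>m n - deg_inv_sqrt n E * adj_matrix n E * deg_inv_sqrt n E"

definition induced_edges :: "(nat \<Rightarrow> nat \<Rightarrow> bool) \<Rightarrow> nat set \<Rightarrow> nat set set" where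
  "induced_edges E S = {{i, j} | i j. i \<in> S \<and> j \<in> S \<and> E i j}"

definition boundary_edges :: "nat \<Rightarrow> (nat \<Rightarrow> nat \<Rightarrow> bool) \<Rightarrow> nat set \<Rightarrow> nat set set" where
  "boundary_edges n E S = {{i, j} | i j. i \<in> S \<and> j \<in> {..<n} - S \<and> E i j}"

definition has_cycle_in :: "(nat \<Rightarrow> nat \<Rightarrow> bool) \<Rightarrow> nat set \<Rightarrow> bool" where
  "has_cycle_in E S \<longleftrightarrow> (\<exists>vs. distinct vs \<and> length vs \<ge> 3 \<and> set vs \<subseteq> S \<and>
      (\<forall>k < length vs. E (vs ! k) (vs ! ((k + 1) mod length vs))))"

definition dangling :: "nat \<Rightarrow> (nat \<Rightarrow> nat \<Rightarrow> bool) \<Rightarrow> nat \<Rightarrow> nat set \<Rightarrow> bool" where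
  "dangling n E g S \<longleftrightarrow> S \<subseteq> {..<n} \<and> card S = g \<and>
     card (induced_edges E S) = g - 1 \<and> \<not> has_cycle_in E S \<and>
     card (boundary_edges n E S) = 1"

end

theory Submission
  imports Defs "Jordan_Normal_Form.Spectral_Radius"
begin

lemma lin_sys:
  fixes w :: "'i \<Rightarrow> nat \<Rightarrow> real"
  assumes "finite I" "card I < Q"
  shows "\<exists>a. (\<exists>l<Q. a l \<noteq> 0) \<and> (\<forall>i\<in>I. (\<Sum>l<Q. w i l * a l) = 0)"
  using assms
proof (induction Q arbitrary: I w)
  case 0 then show ?case by simp
next
  case (Suc Q)
  show ?case
  proof (cases "\<forall>i\<in>I. w i Q = 0")
    case True
    show ?thesis
      by (rule exI[of _ "\<lambda>l. if l = Q then 1 else 0"]) (use True in \<open>auto simp: if_distrib cong: if_cong\<close>)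
  next
    case False
    then obtain i0 where i0: "i0 \<in> I" "w i0 Q \<noteq> 0" by auto
    define w' where "w' i l = w i l - (w i Q / w i0 Q) * w i0 l" for i l
    have "card (I - {i0}) < Q" using Suc.prems i0 card_gt_0_iff[of I] by (auto simp: card_Diff_singleton)
    from Suc.IH[OF _ this, of w'] Suc.prems obtain a' where
      a': "\<exists>l<Q. a' l \<noteq> 0" "\<forall>i\<in>I - {i0}. (\<Sum>l<Q. w' i l * a' l) = 0" by auto
    define S0 where "S0 = (\<Sum>l<Q. w i0 l * a' l)"
    define a where "a l = (if l < Q then a' l else - S0 / w i0 Q)" for l
    have sa: "(\<Sum>l<Suc Q. w i l * a l) = (\<Sum>l<Q. w i l * a' l) - w i Q * S0 / w i0 Q" for i
      by (simp add: a_def)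
    show ?thesis
    proof (rule exI[of _ a], intro conjI ballI)
      show "\<exists>l<Suc Q. a l \<noteq> 0" using a' by (auto simp: a_def)
      fix i assume i: "i \<in> I"
      show "(\<Sum>l<Suc Q. w i l * a l) = 0"
      proof (cases "i = i0")
        case True then show ?thesis using i0 unfolding sa by (simp add: S0_def)
      next
        case False
        with a' i have "(\<Sum>l<Q. w' i l * a' l) = 0" by auto
        hence "(\<Sum>l<Q. w i l * a' l) - (w i Q / w i0 Q) * S0 = 0"
          by (simp add: w'_def algebra_simps sum_subtractf sum_distrib_left S0_def)
        then show ?thesis unfolding sa by simp
      qed
    qed
  qed
qed

lemma prod_lin_nz: "(\<Prod>e\<leftarrow>es. [:-e, 1::real:]) \<noteq> 0"
proof (induction es)
  case (Cons a es)
  have "[:-a, 1::real:] \<noteq> 0" by simp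
  with Cons show ?case by (simp only: list.map prod_list.Cons mult_eq_0_iff) simp
qed simp

lemma order_lin: "order x [:-e, 1::real:] = (if x = e then 1 else 0)"
proof (cases "x = e")
  case True then show ?thesis using order_power_n_n[of x 1] by simp
next
  case False then show ?thesis by (auto intro!: order_0I)
qed

lemma order_prod_lin: "order x (\<Prod>e\<leftarrow>es. [:-e, 1::real:]) = count_list es x"
proof (induction es)
  case Nil then show ?case using order_0I[of 1 x] by simp
next
  case (Cons a es)
  have "order x (\<Prod>e\<leftarrow>a#es. [:-e, 1::real:]) = order x [:-a,1:] + order x (\<Prod>e\<leftarrow>es. [:-e, 1::real:])"
    using prod_lin_nz[of "a#es"] order_mult by (simp only: list.map prod_list.Cons)
  then show ?case using Cons by (simp add: order_lin)
qed

lemma root_prod_lin: "poly (\<Prod>e\<leftarrow>es. [:-e, 1::real:]) x = 0 \<longleftrightarrow> x \<in> set es"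
  by (induction es) auto

lemma sum_count_list: "finite T \<Longrightarrow> (\<Sum>x\<in>T. count_list es x) = length (filter (\<lambda>e. e \<in> T) es)"
proof (induction es)
  case Nil then show ?case by simp
next
  case (Cons a es)
  have "(\<Sum>x\<in>T. count_list (a#es) x) = (\<Sum>x\<in>T. count_list es x) + (\<Sum>x\<in>T. if a = x then 1 else 0)"
    unfolding sum.distrib[symmetric] by (rule sum.cong) simp_all
  also have "(\<Sum>x\<in>T. if a = x then 1 else 0) = (if a \<in> T then 1 else (0::nat))"
    using Cons.prems by (simp add: sum.delta')
  finally show ?case using Cons by simp
qed

lemma real_eigvec_aux:
  fixes A :: "real mat" and z :: "complex vec" and \<mu> :: complex
  assumes A: "A \<in> carrier_mat n n" and sym: "\<And>i j. i < n \<Longrightarrow> j < n \<Longrightarrow> A $$ (i,j) = A $$ (j,i)"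
    and ev: "\<And>i. i < n \<Longrightarrow> (\<Sum>j<n. of_real (A $$ (i,j)) * z $ j) = \<mu> * z $ i"
    and nz: "i0 < n" "z $ i0 \<noteq> 0"
  shows "Im \<mu> = 0"
proof -
  define s where "s = (\<Sum>i<n. cnj (z $ i) * (\<Sum>j<n. of_real (A $$ (i,j)) * z $ j))"
  define N where "N = (\<Sum>i<n. (cmod (z $ i))^2)"
  have "s = (\<Sum>i<n. cnj (z $ i) * (\<mu> * z $ i))" unfolding s_def using ev by simp
  also have "\<dots> = \<mu> * (\<Sum>i<n. cnj (z $ i) * z $ i)" by (simp add: sum_distrib_left algebra_simps)
  also have "(\<Sum>i<n. cnj (z $ i) * z $ i) = of_real N"
    unfolding N_def of_real_sum by (intro sum.cong refl) (simp add: complex_mult_cnj cmod_power2 complex_of_real_def mult.commute)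
  finally have s1: "s = \<mu> * of_real N" .
  have "cnj s = (\<Sum>i<n. z $ i * (\<Sum>j<n. of_real (A $$ (i,j)) * cnj (z $ j)))"
    unfolding s_def by (simp add: cnj_sum)
  also have "\<dots> = (\<Sum>i<n. \<Sum>j<n. of_real (A $$ (i,j)) * z $ i * cnj (z $ j))"
    by (simp add: sum_distrib_left algebra_simps)
  also have "\<dots> = (\<Sum>j<n. \<Sum>i<n. of_real (A $$ (i,j)) * z $ i * cnj (z $ j))"
    by (rule sum.swap)
  also have "\<dots> = (\<Sum>j<n. \<Sum>i<n. cnj (z $ j) * (of_real (A $$ (j,i)) * z $ i))"
    using sym by (intro sum.cong refl) (simp add: algebra_simps)
  also have "\<dots> = s" unfolding s_def by (simp add: sum_distrib_left)
  finally have "cnj s = s" .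
  hence "Im (cnj s) = Im s" by simp
  moreover have "Im (cnj s) = - Im s" by simp
  ultimately have "Im s = 0" by linarith
  hence "Im \<mu> * N = 0" using s1 by simp
  moreover have "N > 0"
  proof -
    have "(cmod (z $ i0))^2 > 0" using nz by simp
    moreover have "(cmod (z $ i0))^2 \<le> N" unfolding N_def
      by (rule member_le_sum) (use nz in auto)
    ultimately show ?thesis by linarith
  qed
  ultimately show ?thesis by simp
qed

lemma real_eigvec:
  fixes A :: "real mat"
  assumes A: "A \<in> carrier_mat n n" and sym: "\<And>i j. i < n \<Longrightarrow> j < n \<Longrightarrow> A $$ (i,j) = A $$ (j,i)"
    and n: "n > 0"
  shows "\<exists>lam v. v \<in> carrier_vec n \<and> v \<bullet> v = 1 \<and> A *\<^sub>v v = lam \<cdot>\<^sub>v v"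
proof -
  define B where "B = map_mat complex_of_real A"
  have B: "B \<in> carrier_mat n n" using A unfolding B_def by simp
  from spectrum_non_empty[OF B n] obtain \<mu> where "\<mu> \<in> spectrum B" by auto
  then obtain z where z: "z \<in> carrier_vec n" "z \<noteq> 0\<^sub>v n" "B *\<^sub>v z = \<mu> \<cdot>\<^sub>v z"
    unfolding spectrum_def eigenvalue_def eigenvector_def using B by auto
  have ev: "(\<Sum>j<n. of_real (A $$ (i,j)) * z $ j) = \<mu> * z $ i" if i: "i < n" for i
  proof -
    have "\<mu> * z $ i = (\<mu> \<cdot>\<^sub>v z) $ i" using z i by simp
    also have "\<dots> = (B *\<^sub>v z) $ i" by (simp only: z(3))
    also have "\<dots> = (\<Sum>j\<in>{0..<n}. B $$ (i,j) * z $ j)" using B z(1) i by (simp add: scalar_prod_def)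
    also have "\<dots> = (\<Sum>j<n. of_real (A $$ (i,j)) * z $ j)" using A i
      by (auto simp: B_def lessThan_atLeast0 intro!: sum.cong)
    finally show ?thesis by simp
  qed
  obtain i0 where i0: "i0 < n" "z $ i0 \<noteq> 0"
    using z by (metis eq_vecI carrier_vecD index_zero_vec(1) index_zero_vec(2))
  have Im0: "Im \<mu> = 0" by (rule real_eigvec_aux[OF A sym ev i0]) auto
  define lam where "lam = Re \<mu>"
  have mu: "\<mu> = of_real lam" using Im0 unfolding lam_def by (simp add: complex_eq_iff)
  have evR: "(\<Sum>j<n. A $$ (i,j) * f (z $ j)) = lam * f (z $ i)"
    if i: "i < n" and f: "f = Re \<or> f = Im" for i f
  proof -
    have "f (\<Sum>j<n. of_real (A $$ (i,j)) * z $ j) = f (\<mu> * z $ i)" using ev[OF i] by simp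
    thus ?thesis using f unfolding mu by (auto simp: Re_sum Im_sum)
  qed
  obtain f where f: "f = Re \<or> f = Im" "f (z $ i0) \<noteq> 0"
    using i0 complex_eqI[of "z $ i0" 0] by fastforce
  define w where "w = vec n (\<lambda>j. f (z $ j))"
  have w: "w \<in> carrier_vec n" unfolding w_def by simp
  have Aw: "A *\<^sub>v w = lam \<cdot>\<^sub>v w"
    by (rule eq_vecI) (use A evR[OF _ f(1)] in \<open>auto simp: w_def scalar_prod_def lessThan_atLeast0 row_def\<close>)
  define N where "N = w \<bullet> w"
  have N: "N = (\<Sum>j<n. (f (z $ j))^2)" unfolding N_def w_def scalar_prod_def
    by (simp add: lessThan_atLeast0 power2_eq_square)
  have "N > 0"
  proof -
    have "(f (z $ i0))^2 > 0" using f by simp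
    moreover have "(f (z $ i0))^2 \<le> N" unfolding N
      by (rule member_le_sum) (use i0 in auto)
    ultimately show ?thesis by linarith
  qed
  define v where "v = (1 / sqrt N) \<cdot>\<^sub>v w"
  have "v \<bullet> v = (1 / sqrt N) * (1 / sqrt N) * N"
    unfolding v_def N_def using w by (simp add: smult_scalar_prod_distrib scalar_prod_smult_distrib)
  also have "\<dots> = 1" using \<open>N > 0\<close> by (simp add: field_simps)
  finally have vv: "v \<bullet> v = 1" .
  have "A *\<^sub>v v = lam \<cdot>\<^sub>v v" unfolding v_def using A w Aw
    by (simp add: mult_mat_vec smult_smult_assoc mult.commute)
  moreover have "v \<in> carrier_vec n" using w unfolding v_def by simp
  ultimately show ?thesis using vv by blast
qed

lemma householder_sum:
  fixes u :: "nat \<Rightarrow> real"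
  assumes i: "i < N" and j: "j < N" and s: "s = (\<Sum>k<N. (u k)^2)" and s0: "s \<noteq> 0"
  shows "(\<Sum>k<N. ((if k = i then 1 else 0) - 2 * u k * u i / s) * ((if k = j then 1 else 0) - 2 * u k * u j / s))
     = (if i = j then 1 else 0)"
proof -
  have "(\<Sum>k<N. ((if k = i then 1 else 0) - 2 * u k * u i / s) * ((if k = j then 1 else 0) - 2 * u k * u j / s))
    = (\<Sum>k<N. (if k = i \<and> k = j then 1 else 0))
      - (\<Sum>k<N. (if k = i then 2 * u k * u j / s else 0))
      - (\<Sum>k<N. (if k = j then 2 * u k * u i / s else 0))
      + (\<Sum>k<N. (u k)^2) * (4 * u i * u j / s^2)"
  proof -
    have pt: "((if k = i then 1 else 0) - 2 * u k * u i / s) * ((if k = j then 1 else 0) - 2 * u k * u j / s)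
      = (if k = i \<and> k = j then 1 else 0) - (if k = i then 2 * u k * u j / s else 0)
        - (if k = j then 2 * u k * u i / s else 0) + (u k)^2 * (4 * u i * u j / s^2)" for k
      using s0 by (cases "k = i"; cases "k = j") (simp_all add: field_simps power2_eq_square)
    show ?thesis unfolding pt by (simp only: sum.distrib sum_subtractf sum_distrib_right)
  qed
  also have "\<dots> = (if i = j then 1 else 0) - 2 * u i * u j / s - 2 * u j * u i / s + s * (4 * u i * u j / s^2)"
  proof -
    have "(\<Sum>k<N. if k = i \<and> k = j then 1 else 0) = (if i = j then 1 else (0::real))" using i by (cases "i=j") auto
    then show ?thesis using i j by (simp add: s[symmetric])
  qed
  also have "\<dots> = (if i = j then 1 else 0)" using s0 by (simp add: field_simps power2_eq_square)
  finally show ?thesis .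
qed

lemma householder:
  fixes v :: "real vec"
  assumes v: "v \<in> carrier_vec N" and vv: "v \<bullet> v = 1" and N: "0 < N"
  shows "\<exists>W. W \<in> carrier_mat N N \<and> transpose_mat W * W = 1\<^sub>m N \<and> col W 0 = v"
proof -
  define u where "u k = (if k = 0 then 1 else 0) - v $ k" for k
  define s where "s = (\<Sum>k<N. (u k)^2)"
  have vv': "(\<Sum>k<N. (v $ k)^2) = 1" using vv v by (simp add: scalar_prod_def lessThan_atLeast0 power2_eq_square)
  have s_eq: "s = 2 * u 0"
  proof -
    have "s = (\<Sum>k<N. (if k = 0 then 1 - 2 * v $ k else 0) + (v $ k)^2)"
      unfolding s_def u_def by (intro sum.cong refl) (simp add: power2_eq_square algebra_simps)
    also have "\<dots> = 1 - 2 * v $ 0 + 1" using N vv' by (simp add: sum.distrib)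
    finally show ?thesis by (simp add: u_def)
  qed
  show ?thesis
  proof (cases "s = 0")
    case True
    have "u k = 0" if "k < N" for k
    proof -
      have "(u k)^2 \<le> s" unfolding s_def by (rule member_le_sum) (use that in auto)
      thus ?thesis using True by simp
    qed
    hence "v = unit_vec N 0" using v N by (intro eq_vecI) (auto simp: u_def unit_vec_def)
    thus ?thesis by (intro exI[of _ "1\<^sub>m N"]) (use N in auto)
  next
    case False
    define W where "W = mat N N (\<lambda>(i,j). (if i = j then 1 else 0) - 2 * u i * u j / s)"
    have W: "W \<in> carrier_mat N N" unfolding W_def by simp
    have "transpose_mat W * W = 1\<^sub>m N"
    proof (rule eq_matI)
      fix i j assume i: "i < dim_row (1\<^sub>m N)" and j: "j < dim_col (1\<^sub>m N)"
      hence i: "i < N" and j: "j < N" by auto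
      have "(transpose_mat W * W) $$ (i,j) = (\<Sum>k\<in>{0..<N}. W $$ (k,i) * W $$ (k,j))"
        using W i j by (simp add: scalar_prod_def)
      also have "\<dots> = (\<Sum>k<N. ((if k = i then 1 else 0) - 2 * u k * u i / s) * ((if k = j then 1 else 0) - 2 * u k * u j / s))"
        using i j by (auto simp: W_def lessThan_atLeast0 intro!: sum.cong)
      also have "\<dots> = 1\<^sub>m N $$ (i,j)" using householder_sum[OF i j s_def False] i j by simp
      finally show "(transpose_mat W * W) $$ (i,j) = 1\<^sub>m N $$ (i,j)" .
    qed (use W in auto)
    moreover have "col W 0 = v"
    proof (rule eq_vecI)
      fix i assume "i < dim_vec v"
      hence i: "i < N" using v by simp
      have u0: "2 * u 0 / s = 1" using s_eq False by simp
      have "col W 0 $ i = (if i = 0 then 1 else 0) - u i * (2 * u 0 / s)"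
        using i N by (simp add: W_def)
      also have "\<dots> = v $ i" using u0 by (simp add: u_def)
      finally show "col W 0 $ i = v $ i" .
    qed (use W v in auto)
    ultimately show ?thesis using W by blast
  qed
qed

lemma spectral:
  fixes A :: "real mat"
  assumes "A \<in> carrier_mat n n" and "transpose_mat A = A"
  shows "\<exists>P es. P \<in> carrier_mat n n \<and> length es = n \<and> transpose_mat P * P = 1\<^sub>m n \<and>
     transpose_mat P * A * P = mat n n (\<lambda>(i,j). if i = j then es ! i else 0)"
  using assms
proof (induction n arbitrary: A)
  case 0
  show ?case
    by (rule exI[of _ "1\<^sub>m 0"], rule exI[of _ "[]"]) (use 0 in \<open>auto intro!: eq_matI\<close>)
next
  case (Suc m)
  note A = Suc.prems(1)
  have sym: "A $$ (i,j) = A $$ (j,i)" if "i < Suc m" "j < Suc m" for i j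
    using arg_cong[OF Suc.prems(2), of "\<lambda>M. M $$ (i,j)"] that A by auto
  obtain lam v where v: "v \<in> carrier_vec (Suc m)" "v \<bullet> v = 1" "A *\<^sub>v v = lam \<cdot>\<^sub>v v"
    using real_eigvec[OF A sym] by auto
  obtain W where W: "W \<in> carrier_mat (Suc m) (Suc m)" "transpose_mat W * W = 1\<^sub>m (Suc m)" "col W 0 = v"
    using householder[OF v(1) v(2)] by auto
  have WT: "transpose_mat W \<in> carrier_mat (Suc m) (Suc m)" using W by simp
  define A' where "A' = transpose_mat W * A * W"
  have A': "A' \<in> carrier_mat (Suc m) (Suc m)" unfolding A'_def using W A by simp
  have A'T: "transpose_mat A' = A'"
  proof -
    have AW: "A * W \<in> carrier_mat (Suc m) (Suc m)" using A W by simp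
    have "transpose_mat A' = transpose_mat (transpose_mat W * (A * W))" unfolding A'_def using W A WT by simp
    also have "\<dots> = transpose_mat (A * W) * W" using transpose_mult[OF WT AW] by simp
    also have "transpose_mat (A * W) = transpose_mat W * A" using transpose_mult[OF A W(1)] Suc.prems(2) by simp
    finally show ?thesis unfolding A'_def by simp
  qed
  have "col A' 0 = transpose_mat W *\<^sub>v (A *\<^sub>v col W 0)"
  proof -
    have AW: "A * W \<in> carrier_mat (Suc m) (Suc m)" using A W by simp
    have "col A' 0 = transpose_mat W *\<^sub>v col (A * W) 0" unfolding A'_def
      using W A WT col_mult2[OF WT AW, of 0] by simp
    also have "col (A * W) 0 = A *\<^sub>v col W 0" using col_mult2[OF A W(1), of 0] by simp
    finally show ?thesis .
  qed
  also have "\<dots> = lam \<cdot>\<^sub>v (transpose_mat W *\<^sub>v col W 0)" using v W WT by (simp add: mult_mat_vec)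
  also have "transpose_mat W *\<^sub>v col W 0 = col (transpose_mat W * W) 0" using col_mult2[OF WT W(1), of 0] by simp
  also have "\<dots> = col (1\<^sub>m (Suc m)) 0" by (simp only: W(2))
  also have "\<dots> = unit_vec (Suc m) 0" by simp
  finally have colA': "col A' 0 = lam \<cdot>\<^sub>v unit_vec (Suc m) 0" .
  have A'i0: "A' $$ (i,0) = (if i = 0 then lam else 0)" if "i < Suc m" for i
    using arg_cong[OF colA', of "\<lambda>x. x $ i"] that A' by (auto simp: unit_vec_def)
  have A'sym: "A' $$ (i,j) = A' $$ (j,i)" if "i < Suc m" "j < Suc m" for i j
    using arg_cong[OF A'T, of "\<lambda>M. M $$ (i,j)"] that A' by auto
  define A3 where "A3 = mat m m (\<lambda>(i,j). A' $$ (Suc i, Suc j))"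
  have A3: "A3 \<in> carrier_mat m m" unfolding A3_def by simp
  have A3T: "transpose_mat A3 = A3"
    by (rule eq_matI) (use A'sym in \<open>auto simp: A3_def\<close>)
  define A1 where "A1 = mat 1 1 (\<lambda>_. lam)"
  have A'blk: "A' = four_block_mat A1 (0\<^sub>m 1 m) (0\<^sub>m m 1) A3"
  proof (rule eq_matI)
    fix i j assume "i < dim_row (four_block_mat A1 (0\<^sub>m 1 m) (0\<^sub>m m 1) A3)"
      "j < dim_col (four_block_mat A1 (0\<^sub>m 1 m) (0\<^sub>m m 1) A3)"
    hence i: "i < Suc m" and j: "j < Suc m" by (auto simp: A1_def A3_def)
    show "A' $$ (i,j) = four_block_mat A1 (0\<^sub>m 1 m) (0\<^sub>m m 1) A3 $$ (i,j)"
    proof (cases "j = 0")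
      case True then show ?thesis using i A'i0[OF i] by (auto simp: A1_def A3_def)
    next
      case False
      show ?thesis
      proof (cases "i = 0")
        case True then show ?thesis using j False A'i0[OF j] A'sym[OF i j] by (auto simp: A1_def A3_def)
      next
        case False2: False
        obtain i' j' where "i = Suc i'" "j = Suc j'" using False False2 by (metis not0_implies_Suc)
        then show ?thesis using i j by (auto simp: A1_def A3_def)
      qed
    qed
  qed (use A' in \<open>auto simp: A1_def A3_def\<close>)
  obtain P3 es3 where P3: "P3 \<in> carrier_mat m m" "length es3 = m" "transpose_mat P3 * P3 = 1\<^sub>m m"
    "transpose_mat P3 * A3 * P3 = mat m m (\<lambda>(i,j). if i = j then es3 ! i else 0)"
    using Suc.IH[OF A3 A3T] by auto
  define F where "F = four_block_mat (1\<^sub>m 1) (0\<^sub>m 1 m) (0\<^sub>m m 1) P3"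
  have F: "F \<in> carrier_mat (Suc m) (Suc m)" unfolding F_def
    using four_block_carrier_mat[OF one_carrier_mat P3(1), of 1] by simp
  have FT: "transpose_mat F = four_block_mat (1\<^sub>m 1) (0\<^sub>m 1 m) (0\<^sub>m m 1) (transpose_mat P3)"
    unfolding F_def by (subst transpose_four_block_mat[of _ 1 1 _ m _ m]) (use P3 in auto)
  have P3T: "transpose_mat P3 \<in> carrier_mat m m" using P3 by simp
  have WTWF: "transpose_mat W * (W * F) = F" using assoc_mult_mat[OF WT W(1) F] W(2) F by simp
  define P where "P = W * F"
  have P: "P \<in> carrier_mat (Suc m) (Suc m)" unfolding P_def using W F by simp
  have PT: "transpose_mat P = transpose_mat F * transpose_mat W"
    unfolding P_def using W F by (simp add: transpose_mult)
  have "transpose_mat P * P = transpose_mat F * F"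
  proof -
    have FT': "transpose_mat F \<in> carrier_mat (Suc m) (Suc m)" using F by simp
    have "transpose_mat P * P = (transpose_mat F * transpose_mat W) * (W * F)" unfolding PT by (simp add: P_def)
    also have "\<dots> = transpose_mat F * F"
      by (subst assoc_mult_mat[OF FT' WT, of "W * F" "Suc m"]) (use W F WTWF in auto)
    finally show ?thesis .
  qed
  also have "\<dots> = four_block_mat (1\<^sub>m 1) (0\<^sub>m 1 m) (0\<^sub>m m 1) (transpose_mat P3 * P3)"
    unfolding FT unfolding F_def
    by (subst mult_four_block_mat[of _ 1 1 _ m _ m _ _ 1 _ m]) (use P3 P3T in auto)
  also have "\<dots> = 1\<^sub>m (Suc m)" using P3 by simp
  finally have PP: "transpose_mat P * P = 1\<^sub>m (Suc m)" .
  have "transpose_mat P * A * P = transpose_mat F * A' * F"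
  proof -
    have FT': "transpose_mat F \<in> carrier_mat (Suc m) (Suc m)" using F by simp
    have c1: "transpose_mat W * A \<in> carrier_mat (Suc m) (Suc m)" "W * F \<in> carrier_mat (Suc m) (Suc m)"
      "A * W \<in> carrier_mat (Suc m) (Suc m)" "transpose_mat F * transpose_mat W \<in> carrier_mat (Suc m) (Suc m)"
      "transpose_mat F * (transpose_mat W * A) \<in> carrier_mat (Suc m) (Suc m)"
      "transpose_mat W * (A * W) \<in> carrier_mat (Suc m) (Suc m)"
      "transpose_mat W * A * W \<in> carrier_mat (Suc m) (Suc m)"
      using W F WT FT' A by auto
    have "transpose_mat P * A * P = (transpose_mat F * transpose_mat W) * A * (W * F)" unfolding PT by (simp add: P_def)
    also have "\<dots> = transpose_mat F * (transpose_mat W * A) * (W * F)"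
      using assoc_mult_mat[OF FT' WT A] by simp
    also have "\<dots> = transpose_mat F * ((transpose_mat W * A) * (W * F))"
      using assoc_mult_mat[OF FT' c1(1) c1(2)] by simp
    also have "(transpose_mat W * A) * (W * F) = ((transpose_mat W * A) * W) * F"
      using assoc_mult_mat[OF c1(1) W(1) F] by simp
    also have "transpose_mat F * (((transpose_mat W * A) * W) * F) = transpose_mat F * (transpose_mat W * A * W) * F"
      using assoc_mult_mat[OF FT' c1(7) F] by simp
    finally show ?thesis unfolding A'_def .
  qed
  also have "\<dots> = four_block_mat A1 (0\<^sub>m 1 m) (0\<^sub>m m 1) (transpose_mat P3 * A3 * P3)"
  proof -
    have A1c: "A1 \<in> carrier_mat 1 1" by (simp add: A1_def)
    have X1: "four_block_mat (1\<^sub>m 1) (0\<^sub>m 1 m) (0\<^sub>m m 1) (transpose_mat P3) * four_block_mat A1 (0\<^sub>m 1 m) (0\<^sub>m m 1) A3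
       = four_block_mat A1 (0\<^sub>m 1 m) (0\<^sub>m m 1) (transpose_mat P3 * A3)"
      by (subst mult_four_block_mat[of _ 1 1 _ m _ m _ _ 1 _ m]) (use P3 P3T A3 A1c in auto)
    have X2: "four_block_mat A1 (0\<^sub>m 1 m) (0\<^sub>m m 1) (transpose_mat P3 * A3) * four_block_mat (1\<^sub>m 1) (0\<^sub>m 1 m) (0\<^sub>m m 1) P3
       = four_block_mat A1 (0\<^sub>m 1 m) (0\<^sub>m m 1) (transpose_mat P3 * A3 * P3)"
      by (subst mult_four_block_mat[of _ 1 1 _ m _ m _ _ 1 _ m]) (use P3 P3T A3 A1c in auto)
    show ?thesis unfolding FT A'blk unfolding F_def X1 X2 ..
  qed
  also have "\<dots> = mat (Suc m) (Suc m) (\<lambda>(i,j). if i = j then (lam # es3) ! i else 0)"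
    unfolding P3(4) by (rule eq_matI) (auto simp: A1_def)
  finally show ?case using P PP P3 by (intro exI[of _ P] exI[of _ "lam # es3"]) auto
qed

lemma count_eigs:
  fixes L :: "real mat" and c :: real and U :: "nat \<Rightarrow> nat \<Rightarrow> real"
  assumes L: "L \<in> carrier_mat n n" and LT: "transpose_mat L = L"
    and H: "\<And>a. (\<exists>l<Q. a l \<noteq> 0) \<Longrightarrow>
       vec n (\<lambda>i. \<Sum>l<Q. a l * U i l) \<bullet> (L *\<^sub>v vec n (\<lambda>i. \<Sum>l<Q. a l * U i l))
         < c * (vec n (\<lambda>i. \<Sum>l<Q. a l * U i l) \<bullet> vec n (\<lambda>i. \<Sum>l<Q. a l * U i l))"
  shows "Q \<le> (\<Sum>x\<in>{x. eigenvalue L x \<and> x < c}. order x (char_poly L))"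
proof -
  obtain P es where P: "P \<in> carrier_mat n n" "length es = n" "transpose_mat P * P = 1\<^sub>m n"
    and PD: "transpose_mat P * L * P = mat n n (\<lambda>(i,j). if i = j then es ! i else 0)"
    using spectral[OF L LT] by blast
  define D where "D = mat n n (\<lambda>(i,j). if i = j then es ! i else (0::real))"
  have Dc: "D \<in> carrier_mat n n" unfolding D_def by simp
  have PT: "transpose_mat P \<in> carrier_mat n n" using P by simp
  have PPT: "P * transpose_mat P = 1\<^sub>m n" using mat_mult_left_right_inverse[OF PT P(1) P(3)] .
  have LPD: "L = P * D * transpose_mat P"
  proof -
    have "P * D * transpose_mat P = P * (transpose_mat P * L * P) * transpose_mat P" unfolding PD D_def ..
    also have "\<dots> = (P * transpose_mat P) * L * (P * transpose_mat P)"
      using P PT L by (simp add: assoc_mult_mat[of _ n n _ n _ n])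
    also have "\<dots> = L" using PPT L by simp
    finally show ?thesis by simp
  qed
  have sim: "similar_mat L D" unfolding similar_mat_def
    using similar_mat_witI[OF PPT P(3) LPD L Dc P(1) PT] by blast
  have ut: "upper_triangular D" unfolding D_def upper_triangular_def by auto
  have dg: "diag_mat D = es" unfolding D_def diag_mat_def using P(2)
    by (intro nth_equalityI) auto
  have cp: "char_poly L = (\<Prod>e\<leftarrow>es. [:-e, 1:])"
    using char_poly_similar[OF sim] char_poly_upper_triangular[OF Dc ut] dg by simp
  have set_eq: "{x. eigenvalue L x \<and> x < c} = {x \<in> set es. x < c}"
    using eigenvalue_root_char_poly[OF L] root_prod_lin unfolding cp by auto
  have "(\<Sum>x\<in>{x. eigenvalue L x \<and> x < c}. order x (char_poly L)) = length (filter (\<lambda>e. e \<in> {x \<in> set es. x < c}) es)"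
    unfolding set_eq cp order_prod_lin by (rule sum_count_list) simp
  also have "\<dots> = length (filter (\<lambda>e. e < c) es)" by (rule arg_cong[where f = length], rule filter_cong) auto
  also have "\<dots> = card {i. i < n \<and> es ! i < c}" using P(2) by (simp add: length_filter_conv_card)
  finally have eq: "(\<Sum>x\<in>{x. eigenvalue L x \<and> x < c}. order x (char_poly L)) = card {i. i < n \<and> es ! i < c}" .
  define K where "K = {i. i < n \<and> es ! i < c}"
  have "Q \<le> card K"
  proof (rule ccontr)
    assume "\<not> Q \<le> card K"
    hence "card K < Q" by simp
    moreover have "finite K" unfolding K_def by simp
    ultimately obtain a where a: "\<exists>l<Q. a l \<noteq> 0"
      "\<forall>i\<in>K. (\<Sum>l<Q. (\<Sum>k<n. P $$ (k,i) * U k l) * a l) = 0"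
      using lin_sys[of K Q "\<lambda>i l. \<Sum>k<n. P $$ (k,i) * U k l"] by blast
    define x where "x = vec n (\<lambda>i. \<Sum>l<Q. a l * U i l)"
    have x: "x \<in> carrier_vec n" unfolding x_def by simp
    define y where "y = transpose_mat P *\<^sub>v x"
    have y: "y \<in> carrier_vec n" unfolding y_def using mult_mat_vec_carrier[OF PT x] .
    have yi: "y $ i = 0" if i: "i \<in> K" for i
    proof -
      have i': "i < n" using i unfolding K_def by simp
      have "y $ i = (\<Sum>k\<in>{0..<n}. P $$ (k,i) * x $ k)" unfolding y_def using i' P x
        by (simp add: scalar_prod_def)
      also have "\<dots> = (\<Sum>k<n. \<Sum>l<Q. P $$ (k,i) * U k l * a l)"
        unfolding x_def lessThan_atLeast0 by (intro sum.cong refl) (simp add: sum_distrib_left algebra_simps)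
      also have "\<dots> = (\<Sum>l<Q. (\<Sum>k<n. P $$ (k,i) * U k l) * a l)"
        by (subst sum.swap) (simp add: sum_distrib_right)
      also have "\<dots> = 0" using a(2) i by auto
      finally show ?thesis .
    qed
    have "P *\<^sub>v y = (P * transpose_mat P) *\<^sub>v x" unfolding y_def by (rule assoc_mult_mat_vec[OF P(1) PT x, symmetric])
    also have "\<dots> = x" unfolding PPT using x by simp
    finally have xPy: "x = P *\<^sub>v y" ..
    have "x \<bullet> (L *\<^sub>v x) = (transpose_mat (transpose_mat P) *\<^sub>v y) \<bullet> (L *\<^sub>v x)" by (simp only: transpose_transpose xPy[symmetric])
    also have "\<dots> = y \<bullet> (transpose_mat P *\<^sub>v (L *\<^sub>v x))"
      by (rule transpose_vec_mult_scalar[OF PT]) (use L x y in auto)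
    also have "transpose_mat P *\<^sub>v (L *\<^sub>v x) = D *\<^sub>v y"
    proof -
      have "transpose_mat P *\<^sub>v (L *\<^sub>v x) = transpose_mat P *\<^sub>v (L *\<^sub>v (P *\<^sub>v y))" by (simp only: xPy[symmetric])
      also have "\<dots> = (transpose_mat P * L * P) *\<^sub>v y"
      proof -
        have PTL: "transpose_mat P * L \<in> carrier_mat n n" using PT L by simp
        have Py: "P *\<^sub>v y \<in> carrier_vec n" using P y by simp
        show ?thesis using assoc_mult_mat_vec[OF PTL P(1) y] assoc_mult_mat_vec[OF PT L Py] by simp
      qed
      finally show ?thesis unfolding PD D_def .
    qed
    finally have q1: "x \<bullet> (L *\<^sub>v x) = y \<bullet> (D *\<^sub>v y)" .
    have "x \<bullet> x = (transpose_mat (transpose_mat P) *\<^sub>v y) \<bullet> x" by (simp only: transpose_transpose xPy[symmetric])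
    also have "\<dots> = y \<bullet> (transpose_mat P *\<^sub>v x)"
      by (rule transpose_vec_mult_scalar[OF PT]) (use x y in auto)
    finally have q2: "x \<bullet> x = y \<bullet> y" unfolding y_def .
    have q1': "y \<bullet> (D *\<^sub>v y) = (\<Sum>i<n. es ! i * (y $ i)^2)"
    proof -
      have "D *\<^sub>v y = vec n (\<lambda>i. es ! i * y $ i)"
      proof (rule eq_vecI)
        fix i assume "i < dim_vec (vec n (\<lambda>i. es ! i * y $ i))"
        hence i: "i < n" by simp
        have "(D *\<^sub>v y) $ i = (\<Sum>k\<in>{0..<n}. (if i = k then es ! i else 0) * y $ k)"
          using i y by (simp add: D_def scalar_prod_def)
        also have "\<dots> = (\<Sum>k\<in>{0..<n}. if i = k then es ! i * y $ k else 0)"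
          by (intro sum.cong refl) simp
        also have "\<dots> = es ! i * y $ i" using i by (simp add: sum.delta)
        finally show "(D *\<^sub>v y) $ i = vec n (\<lambda>i. es ! i * y $ i) $ i" using i by simp
      qed (simp add: D_def)
      thus ?thesis using y by (simp add: scalar_prod_def lessThan_atLeast0 power2_eq_square algebra_simps)
    qed
    have q2': "y \<bullet> y = (\<Sum>i<n. (y $ i)^2)" using y by (simp add: scalar_prod_def lessThan_atLeast0 power2_eq_square)
    have "c * (\<Sum>i<n. (y $ i)^2) \<le> (\<Sum>i<n. es ! i * (y $ i)^2)"
      unfolding sum_distrib_left
    proof (rule sum_mono)
      fix i assume "i \<in> {..<n}"
      show "c * (y $ i)^2 \<le> es ! i * (y $ i)^2"
      proof (cases "i \<in> K")
        case True then show ?thesis using yi by simp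
      next
        case False then have "c \<le> es ! i" using \<open>i \<in> {..<n}\<close> unfolding K_def by auto
        then show ?thesis by (simp add: mult_right_mono)
      qed
    qed
    hence "c * (x \<bullet> x) \<le> x \<bullet> (L *\<^sub>v x)" using q1 q1' q2 q2' by simp
    moreover have "x \<bullet> (L *\<^sub>v x) < c * (x \<bullet> x)" using H[OF a(1)] unfolding x_def .
    ultimately show False by simp
  qed
  thus ?thesis using eq unfolding K_def by simp
qed

lemma out_pair:
  assumes G: "simple_graph n E" and D: "dangling n E g S"
  obtains b ot where "b \<in> S" "ot < n" "ot \<notin> S" "E b ot"
    "\<And>i j. i < n \<Longrightarrow> j < n \<Longrightarrow> E i j \<Longrightarrow> i \<in> S \<Longrightarrow> j \<notin> S \<Longrightarrow> i = b \<and> j = ot"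
proof -
  from D have Sn: "S \<subseteq> {..<n}" and c1: "card (boundary_edges n E S) = 1" unfolding dangling_def by auto
  from c1 obtain e0 where e0: "boundary_edges n E S = {e0}" by (rule card_1_singletonE)
  hence "e0 \<in> boundary_edges n E S" by simp
  then obtain b ot where bo: "e0 = {b, ot}" "b \<in> S" "ot \<in> {..<n} - S" "E b ot"
    unfolding boundary_edges_def by blast
  have uniq: "i = b \<and> j = ot" if "i < n" "j < n" "E i j" "i \<in> S" "j \<notin> S" for i j
  proof -
    have "{i, j} \<in> boundary_edges n E S" unfolding boundary_edges_def using that by blast
    hence "{i, j} = {b, ot}" using e0 bo by simp
    moreover have "i \<noteq> ot" using that bo by auto
    ultimately show ?thesis by (auto simp: doubleton_eq_iff)
  qed
  show ?thesis by (rule that[OF bo(2) _ _ bo(4) uniq]) (use bo in auto)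
qed

lemma within_card:
  assumes G: "simple_graph n E" and D: "dangling n E g S"
  shows "2 * (g - 1) \<le> card {(i,j). i \<in> S \<and> j \<in> S \<and> E i j}"
proof -
  from D have Sn: "S \<subseteq> {..<n}" and ci: "card (induced_edges E S) = g - 1" unfolding dangling_def by auto
  have fin: "finite S" using Sn finite_subset by blast
  define W where "W = {(i,j). i \<in> S \<and> j \<in> S \<and> E i j}"
  define W1 where "W1 = {(i,j). i \<in> S \<and> j \<in> S \<and> E i j \<and> i < j}"
  define W2 where "W2 = {(i,j). i \<in> S \<and> j \<in> S \<and> E i j \<and> j < i}"
  have symE: "E i j \<Longrightarrow> E j i" for i j using G unfolding simple_graph_def by blast
  have irr: "\<not> E i i" for i using G unfolding simple_graph_def by blast
  have finW: "finite W" unfolding W_def using fin by (auto intro: finite_subset[of _ "S \<times> S"])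
  have W: "W = W1 \<union> W2" unfolding W_def W1_def W2_def using irr by (auto simp: linorder_neq_iff) (metis linorder_neqE_nat)
  have W12: "W1 \<inter> W2 = {}" unfolding W1_def W2_def by auto
  have W2s: "W2 = prod.swap ` W1" unfolding W1_def W2_def using symE by (auto simp: image_iff)
  have cW2: "card W2 = card W1" unfolding W2s by (rule card_image) simp
  have ind: "induced_edges E S = (\<lambda>(i,j). {i,j}) ` W1"
  proof
    show "induced_edges E S \<subseteq> (\<lambda>(i,j). {i,j}) ` W1"
    proof
      fix e assume "e \<in> induced_edges E S"
      then obtain i j where e: "e = {i,j}" "i \<in> S" "j \<in> S" "E i j" unfolding induced_edges_def by blast
      have "i \<noteq> j" using e irr by auto
      show "e \<in> (\<lambda>(i,j). {i,j}) ` W1"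
      proof (cases "i < j")
        case True then show ?thesis using e unfolding W1_def by (auto simp: image_iff)
      next
        case False then have "j < i" using \<open>i \<noteq> j\<close> by simp
        then have "(j, i) \<in> W1" using e symE unfolding W1_def by auto
        moreover have "e = {j, i}" using e by auto
        ultimately show ?thesis by force
      qed
    qed
  next
    show "(\<lambda>(i,j). {i,j}) ` W1 \<subseteq> induced_edges E S" unfolding W1_def induced_edges_def by auto
  qed
  have finW1: "finite W1" using finW W by auto
  have "g - 1 \<le> card W1" using ci card_image_le[OF finW1, of "\<lambda>(i,j). {i,j}"] ind by simp
  moreover have "card W = card W1 + card W2" unfolding W using card_Un_disjoint[OF _ _ W12] finW W by auto
  ultimately show ?thesis unfolding W_def[symmetric] using cW2 by simp
qed

lemma degree_eq: "i < n \<Longrightarrow> degree n E i = (\<Sum>j<n. if E i j then 1 else 0)"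
  unfolding degree_def adj_matrix_def by (intro sum.cong refl) simp

lemma vol_dangling:
  assumes G: "simple_graph n E" and D: "dangling n E g S" and g: "g \<ge> 1"
  shows "vol n E S \<ge> 2 * real g - 1"
proof -
  from D have Sn: "S \<subseteq> {..<n}" unfolding dangling_def by auto
  have fin: "finite S" using Sn finite_subset by blast
  obtain b ot where bo: "b \<in> S" "ot < n" "ot \<notin> S" "E b ot"
    using out_pair[OF G D] by metis
  define W where "W = {(i,j). i \<in> S \<and> j \<in> S \<and> E i j}"
  have "vol n E S = (\<Sum>i\<in>S. \<Sum>j<n. (if E i j \<and> j \<in> S then 1 else 0) + (if E i j \<and> j \<notin> S then 1 else 0))"
    unfolding vol_def
  proof (intro sum.cong refl)
    fix i assume "i \<in> S"
    hence i: "i < n" using Sn by auto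
    show "degree n E i = (\<Sum>j<n. (if E i j \<and> j \<in> S then 1 else 0) + (if E i j \<and> j \<notin> S then 1 else 0))"
      unfolding degree_eq[OF i] by (intro sum.cong refl) auto
  qed
  also have "\<dots> = (\<Sum>i\<in>S. \<Sum>j<n. (if E i j \<and> j \<in> S then 1 else 0)) + (\<Sum>i\<in>S. \<Sum>j<n. (if E i j \<and> j \<notin> S then 1 else (0::real)))"
    by (simp add: sum.distrib)
  also have "(\<Sum>i\<in>S. \<Sum>j<n. (if E i j \<and> j \<in> S then 1 else (0::real))) = real (card W)"
  proof -
    have "(\<Sum>i\<in>S. \<Sum>j<n. (if E i j \<and> j \<in> S then 1 else (0::real)))
        = (\<Sum>p\<in>S \<times> {..<n}. if E (fst p) (snd p) \<and> snd p \<in> S then 1 else 0)"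
      by (simp add: sum.cartesian_product case_prod_beta)
    also have "\<dots> = real (card {p \<in> S \<times> {..<n}. E (fst p) (snd p) \<and> snd p \<in> S})"
      using fin by (simp add: sum.inter_filter[symmetric])
    also have "{p \<in> S \<times> {..<n}. E (fst p) (snd p) \<and> snd p \<in> S} = W"
      unfolding W_def using Sn by auto
    finally show ?thesis .
  qed
  also have "(\<Sum>i\<in>S. \<Sum>j<n. (if E i j \<and> j \<notin> S then 1 else (0::real))) \<ge> 1"
  proof -
    have "1 \<le> (\<Sum>j<n. (if E b j \<and> j \<notin> S then 1 else (0::real)))"
      using member_le_sum[of ot "{..<n}" "\<lambda>j. if E b j \<and> j \<notin> S then 1 else (0::real)"] bo by auto
    also have "\<dots> \<le> (\<Sum>i\<in>S. \<Sum>j<n. (if E i j \<and> j \<notin> S then 1 else (0::real)))"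
      by (rule member_le_sum[of b S "\<lambda>i. \<Sum>j<n. (if E i j \<and> j \<notin> S then 1 else (0::real))"])
         (use bo fin in \<open>auto intro: sum_nonneg\<close>)
    finally show ?thesis .
  qed
  moreover have "2 * (g - 1) \<le> card W" using within_card[OF G D] unfolding W_def .
  ultimately show ?thesis using g by (simp add: of_nat_diff)
qed

lemma lap_carrier: "norm_laplacian n E \<in> carrier_mat n n"
  unfolding norm_laplacian_def deg_inv_sqrt_def adj_matrix_def by (rule minus_carrier_mat) auto

lemma lap_entry:
  assumes i: "i < n" and j: "j < n"
  shows "norm_laplacian n E $$ (i,j) = (if i = j then 1 else 0)
     - (if E i j then 1 else 0) / (sqrt (degree n E i) * sqrt (degree n E j))"
proof -
  define M where "M = deg_inv_sqrt n E"
  define A where "A = adj_matrix n E"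
  have M: "M \<in> carrier_mat n n" and A: "A \<in> carrier_mat n n"
    unfolding M_def A_def deg_inv_sqrt_def adj_matrix_def by auto
  have MA: "(M * A) $$ (i,k) = A $$ (i,k) / sqrt (degree n E i)" if k: "k < n" for k
  proof -
    have "(M * A) $$ (i,k) = (\<Sum>m\<in>{0..<n}. M $$ (i,m) * A $$ (m,k))"
      using M A i k by (simp add: scalar_prod_def)
    also have "\<dots> = (\<Sum>m\<in>{0..<n}. if m = i then A $$ (i,k) / sqrt (degree n E i) else 0)"
      using i by (intro sum.cong refl) (auto simp: M_def deg_inv_sqrt_def)
    also have "\<dots> = A $$ (i,k) / sqrt (degree n E i)" using i by simp
    finally show ?thesis .
  qed
  have dims: "dim_row M = n" "dim_col M = n" "dim_row A = n" "dim_col A = n" using M A by auto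
  have "(M * A * M) $$ (i,j) = row (M * A) i \<bullet> col M j"
    by (rule index_mult_mat(1)) (use dims i j in simp_all)
  also have "\<dots> = (\<Sum>k\<in>{0..<n}. (M * A) $$ (i,k) * M $$ (k,j))"
    unfolding scalar_prod_def using dims i j by (intro sum.cong) auto
  also have "\<dots> = (\<Sum>k\<in>{0..<n}. if k = j then A $$ (i,j) / sqrt (degree n E i) / sqrt (degree n E j) else 0)"
  proof (intro sum.cong refl)
    fix k assume "k \<in> {0..<n}"
    hence k: "k < n" by simp
    have Mkj: "M $$ (k,j) = (if k = j then 1 / sqrt (degree n E k) else 0)" using k j by (simp add: M_def deg_inv_sqrt_def)
    show "(M * A) $$ (i,k) * M $$ (k,j) = (if k = j then A $$ (i,j) / sqrt (degree n E i) / sqrt (degree n E j) else 0)"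
      unfolding Mkj MA[OF k] by simp
  qed
  also have "\<dots> = (if E i j then 1 else 0) / (sqrt (degree n E i) * sqrt (degree n E j))"
    using i j by (simp add: A_def adj_matrix_def)
  finally have "(M * A * M) $$ (i,j) = (if E i j then 1 else 0) / (sqrt (degree n E i) * sqrt (degree n E j))" .
  moreover have "norm_laplacian n E $$ (i,j) = 1\<^sub>m n $$ (i,j) - (M * A * M) $$ (i,j)"
    unfolding norm_laplacian_def M_def[symmetric] A_def[symmetric] using M A i j by simp
  ultimately show ?thesis using i j by simp
qed

lemma lap_sym:
  assumes G: "simple_graph n E"
  shows "transpose_mat (norm_laplacian n E) = norm_laplacian n E"
proof (rule eq_matI)
  have symE: "E i j \<longleftrightarrow> E j i" for i j using G unfolding simple_graph_def by blast
  fix i j assume "i < dim_row (norm_laplacian n E)" "j < dim_col (norm_laplacian n E)"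
  hence i: "i < n" and j: "j < n" using lap_carrier[of n E] by auto
  show "transpose_mat (norm_laplacian n E) $$ (i, j) = norm_laplacian n E $$ (i, j)"
    using i j lap_carrier[of n E] by (simp add: lap_entry symE mult.commute)
qed (use lap_carrier[of n E] in auto)

lemma quad_form:
  fixes f :: "nat \<Rightarrow> real"
  assumes dpos: "\<And>i. i < n \<Longrightarrow> degree n E i > 0"
  defines "x \<equiv> vec n (\<lambda>i. sqrt (degree n E i) * f i)"
  shows "x \<bullet> (norm_laplacian n E *\<^sub>v x) = (\<Sum>i<n. degree n E i * (f i)^2)
            - (\<Sum>i<n. \<Sum>j<n. (if E i j then 1 else 0) * f i * f j)"
    and "x \<bullet> x = (\<Sum>i<n. degree n E i * (f i)^2)"
proof -
  let ?L = "norm_laplacian n E"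
  let ?d = "degree n E"
  have x: "x \<in> carrier_vec n" unfolding x_def by simp
  have Lx: "(?L *\<^sub>v x) $ i = sqrt (?d i) * f i - (\<Sum>j<n. (if E i j then 1 else 0) * f j) / sqrt (?d i)"
    if i: "i < n" for i
  proof -
    have "(?L *\<^sub>v x) $ i = (\<Sum>j\<in>{0..<n}. ?L $$ (i,j) * x $ j)"
      using i lap_carrier[of n E] x by (simp add: scalar_prod_def)
    also have "\<dots> = (\<Sum>j<n. (if i = j then sqrt (?d i) * f i else 0) - (if E i j then 1 else 0) * f j / sqrt (?d i))"
    proof (rule sum.cong)
      fix j assume "j \<in> {..<n}"
      hence j: "j < n" by simp
      have dj: "sqrt (?d j) > 0" using dpos[OF j] by simp
      show "?L $$ (i,j) * x $ j = (if i = j then sqrt (?d i) * f i else 0) - (if E i j then 1 else 0) * f j / sqrt (?d i)"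
        using i j dj by (simp add: lap_entry x_def field_simps)
    qed auto
    also have "\<dots> = sqrt (?d i) * f i - (\<Sum>j<n. (if E i j then 1 else 0) * f j) / sqrt (?d i)"
      using i by (simp add: sum_subtractf sum_divide_distrib)
    finally show ?thesis .
  qed
  have "x \<bullet> (?L *\<^sub>v x) = (\<Sum>i\<in>{0..<n}. x $ i * (?L *\<^sub>v x) $ i)"
    using x lap_carrier[of n E] by (simp add: scalar_prod_def)
  also have "\<dots> = (\<Sum>i<n. ?d i * (f i)^2 - (\<Sum>j<n. (if E i j then 1 else 0) * f i * f j))"
  proof (rule sum.cong)
    fix i assume "i \<in> {..<n}"
    hence i: "i < n" by simp
    have di: "sqrt (?d i) > 0" using dpos[OF i] by simp
    have "x $ i * (?L *\<^sub>v x) $ i = sqrt (?d i) * f i * (sqrt (?d i) * f i - (\<Sum>j<n. (if E i j then 1 else 0) * f j) / sqrt (?d i))"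
    proof -
      have "x $ i = sqrt (?d i) * f i" using i by (simp add: x_def)
      then show ?thesis unfolding Lx[OF i] by simp
    qed
    also have "\<dots> = (sqrt (?d i))^2 * (f i)^2 - f i * (\<Sum>j<n. (if E i j then 1 else 0) * f j)"
      using di by (simp add: field_simps power2_eq_square)
    also have "\<dots> = ?d i * (f i)^2 - (\<Sum>j<n. (if E i j then 1 else 0) * f i * f j)"
      using dpos[OF i] by (simp add: sum_distrib_left mult.assoc mult.left_commute)
    finally show "x $ i * (?L *\<^sub>v x) $ i = ?d i * (f i)^2 - (\<Sum>j<n. (if E i j then 1 else 0) * f i * f j)" .
  qed auto
  also have "\<dots> = (\<Sum>i<n. ?d i * (f i)^2) - (\<Sum>i<n. \<Sum>j<n. (if E i j then 1 else 0) * f i * f j)"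
    by (simp add: sum_subtractf)
  finally show "x \<bullet> (?L *\<^sub>v x) = (\<Sum>i<n. ?d i * (f i)^2) - (\<Sum>i<n. \<Sum>j<n. (if E i j then 1 else 0) * f i * f j)" .
  have "x \<bullet> x = (\<Sum>i\<in>{0..<n}. x $ i * x $ i)" using x by (simp add: scalar_prod_def)
  also have "\<dots> = (\<Sum>i<n. ?d i * (f i)^2)"
  proof (rule sum.cong)
    fix i assume "i \<in> {..<n}"
    hence i: "i < n" by simp
    show "x $ i * x $ i = ?d i * (f i)^2" using i dpos[OF i] by (simp add: x_def power2_eq_square algebra_simps)
  qed auto
  finally show "x \<bullet> x = (\<Sum>i<n. ?d i * (f i)^2)" .
qed

lemma dirichlet:
  assumes G: "simple_graph n E"
  shows "(\<Sum>i<n. \<Sum>j<n. (if E i j then 1 else 0) * (f i - f j)^2)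
     = 2 * ((\<Sum>i<n. degree n E i * (f i)^2) - (\<Sum>i<n. \<Sum>j<n. (if E i j then 1 else 0) * f i * f j))"
proof -
  have symE: "E i j \<longleftrightarrow> E j i" for i j using G unfolding simple_graph_def by blast
  let ?e = "\<lambda>i j. (if E i j then 1 else 0::real)"
  have "(\<Sum>i<n. \<Sum>j<n. ?e i j * (f i - f j)^2)
     = (\<Sum>i<n. \<Sum>j<n. ?e i j * (f i)^2) + (\<Sum>i<n. \<Sum>j<n. ?e i j * (f j)^2) - 2 * (\<Sum>i<n. \<Sum>j<n. ?e i j * f i * f j)"
    by (simp add: power2_diff algebra_simps sum.distrib sum_subtractf sum_distrib_left)
  also have "(\<Sum>i<n. \<Sum>j<n. ?e i j * (f j)^2) = (\<Sum>j<n. \<Sum>i<n. ?e j i * (f j)^2)"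
    by (subst sum.swap) (simp add: symE)
  also have "(\<Sum>j<n. \<Sum>i<n. ?e j i * (f j)^2) = (\<Sum>i<n. degree n E i * (f i)^2)"
    by (intro sum.cong refl) (simp add: degree_eq sum_distrib_right)
  finally show ?thesis by simp
qed

lemma aux_ineq: "(2::real) * x \<le> 4 * y \<Longrightarrow> 2 * y < z \<Longrightarrow> x < z" by linarith

theorem theorem3p5:
  fixes n :: nat and E :: "nat \<Rightarrow> nat \<Rightarrow> bool" and g Q :: nat and S :: "nat \<Rightarrow> nat set"
  assumes graph: "simple_graph n E"
    and no_isolated: "\<forall>i<n. \<exists>j. E i j"
    and g: "g \<ge> 2" and Q: "Q \<ge> 1"
    and dang: "\<forall>l\<in>{1..Q}. dangling n E g (S l)"
    and disj: "\<forall>l\<in>{1..Q}. \<forall>m\<in>{1..Q}. l \<noteq> m \<longrightarrow> S l \<inter> S m = {}"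
    and vol0: "vol n E ({..<n} - (\<Union>l\<in>{1..Q}. S l)) \<ge> 4 * (real g)^2"
  shows "real (\<Sum>x\<in>{x. eigenvalue (norm_laplacian n E) x \<and> x < 1 / (real g - 1)}.
              order x (char_poly (norm_laplacian n E))) \<ge> real Q / 2"
proof -
  define c where "c = 1 / (real g - 1)"
  define d where "d = degree n E"
  define e where "e i j = (if E i j then 1 else (0::real))" for i j
  have symE: "E i j \<longleftrightarrow> E j i" for i j using graph unfolding simple_graph_def by blast
  have Ebound: "E i j \<Longrightarrow> j < n" for i j using graph unfolding simple_graph_def by blast
  have dpos: "degree n E i > 0" if i: "i < n" for i
  proof -
    obtain j where j: "E i j" using no_isolated i by blast
    have jn: "j < n" using Ebound[OF j] .
    have "(1::real) \<le> (\<Sum>j<n. if E i j then 1 else 0)"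
      using member_le_sum[of j "{..<n}" "\<lambda>j. if E i j then 1 else (0::real)"] j jn by auto
    thus ?thesis unfolding degree_eq[OF i] by simp
  qed
  have dangl: "dangling n E g (S (Suc l))" if "l < Q" for l using dang that by auto
  have disjl: "S (Suc l) \<inter> S (Suc m) = {}" if "l < Q" "m < Q" "l \<noteq> m" for l m
    using disj that by auto
  have Ssub: "S (Suc l) \<subseteq> {..<n}" if "l < Q" for l using dangl[OF that] unfolding dangling_def by auto
  have collapse: "(\<Sum>l<Q. if i \<in> S (Suc l) then F l else 0) = F l0"
    if "i \<in> S (Suc l0)" "l0 < Q" for i l0 and F :: "nat \<Rightarrow> real"
  proof -
    have "(\<Sum>l<Q. if i \<in> S (Suc l) then F l else 0) = (\<Sum>l<Q. if l = l0 then F l else 0)"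
      using that disjl by (intro sum.cong refl) auto
    also have "\<dots> = F l0" using that by simp
    finally show ?thesis .
  qed
  have none: "(\<Sum>l<Q. if i \<in> S (Suc l) then F l else 0) = 0"
    if "\<forall>l<Q. i \<notin> S (Suc l)" for i and F :: "nat \<Rightarrow> real"
    using that by (intro sum.neutral) auto
  define U where "U i l = (if i \<in> S (Suc l) then sqrt (d i) else 0)" for i l
  have H: "vec n (\<lambda>i. \<Sum>l<Q. a l * U i l) \<bullet> (norm_laplacian n E *\<^sub>v vec n (\<lambda>i. \<Sum>l<Q. a l * U i l))
         < c * (vec n (\<lambda>i. \<Sum>l<Q. a l * U i l) \<bullet> vec n (\<lambda>i. \<Sum>l<Q. a l * U i l))"
    if a: "\<exists>l<Q. a l \<noteq> 0" for a
  proof -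
    define f where "f i = (\<Sum>l<Q. if i \<in> S (Suc l) then a l else 0)" for i
    have xeq: "vec n (\<lambda>i. \<Sum>l<Q. a l * U i l) = vec n (\<lambda>i. sqrt (degree n E i) * f i)"
      unfolding f_def U_def d_def by (intro eq_vecI) (auto simp: sum_distrib_left intro!: sum.cong)
    have fpart: "f i = a l0" if "i \<in> S (Suc l0)" "l0 < Q" for i l0
      unfolding f_def by (rule collapse[OF that])
    have fnone: "f i = 0" if "\<forall>l<Q. i \<notin> S (Suc l)" for i
      unfolding f_def by (rule none[OF that])
    define A2 where "A2 = (\<Sum>l<Q. (a l)^2)"
    have A2pos: "A2 > 0"
    proof -
      obtain l where l: "l < Q" "a l \<noteq> 0" using a by blast
      have "(a l)^2 \<le> A2" unfolding A2_def by (rule member_le_sum) (use l in auto)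
      moreover have "(a l)^2 > 0" using l by simp
      ultimately show ?thesis by linarith
    qed
    define DEN where "DEN = (\<Sum>i<n. degree n E i * (f i)^2)"
    define CR where "CR = (\<Sum>i<n. \<Sum>j<n. (if E i j then 1 else 0) * f i * f j)"
    define NUM where "NUM = (\<Sum>i<n. \<Sum>j<n. (if E i j then 1 else 0) * (f i - f j)^2)"
    have NUMeq: "NUM = 2 * (DEN - CR)" unfolding NUM_def DEN_def CR_def by (rule dirichlet[OF graph])
    have fsq: "(f i)^2 = (\<Sum>l<Q. if i \<in> S (Suc l) then (a l)^2 else 0)" for i
    proof (cases "\<exists>l<Q. i \<in> S (Suc l)")
      case True
      then obtain l0 where l0: "l0 < Q" "i \<in> S (Suc l0)" by blast
      show ?thesis using fpart[OF l0(2,1)] collapse[OF l0(2,1), of "\<lambda>l. (a l)^2"] by simp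
    next
      case False
      then show ?thesis using fnone none[of i "\<lambda>l. (a l)^2"] by auto
    qed
    have "DEN = (\<Sum>i<n. \<Sum>l<Q. if i \<in> S (Suc l) then degree n E i * (a l)^2 else 0)"
      unfolding DEN_def fsq by (simp add: sum_distrib_left if_distrib cong: if_cong)
    also have "\<dots> = (\<Sum>l<Q. \<Sum>i<n. if i \<in> S (Suc l) then degree n E i * (a l)^2 else 0)"
      by (rule sum.swap)
    also have "\<dots> = (\<Sum>l<Q. (a l)^2 * vol n E (S (Suc l)))"
    proof (rule sum.cong[OF refl])
      fix l assume "l \<in> {..<Q}"
      hence l: "l < Q" by simp
      have "(\<Sum>i<n. if i \<in> S (Suc l) then degree n E i * (a l)^2 else 0)
          = (\<Sum>i\<in>{..<n} \<inter> S (Suc l). degree n E i * (a l)^2)"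
        by (simp add: sum.inter_restrict)
      also have "{..<n} \<inter> S (Suc l) = S (Suc l)" using Ssub[OF l] by auto
      finally show "(\<Sum>i<n. if i \<in> S (Suc l) then degree n E i * (a l)^2 else 0) = (a l)^2 * vol n E (S (Suc l))"
        unfolding vol_def by (simp add: sum_distrib_left mult.commute)
    qed
    finally have DENeq: "DEN = (\<Sum>l<Q. (a l)^2 * vol n E (S (Suc l)))" .
    have DENge: "(2 * real g - 1) * A2 \<le> DEN"
      unfolding DENeq A2_def sum_distrib_left
    proof (rule sum_mono)
      fix l assume "l \<in> {..<Q}"
      hence l: "l < Q" by simp
      have vl: "2 * real g - 1 \<le> vol n E (S (Suc l))" using vol_dangling[OF graph dangl[OF l]] g by simp
      thus "(2 * real g - 1) * (a l)^2 \<le> (a l)^2 * vol n E (S (Suc l))"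
        using mult_right_mono[OF vl, of "(a l)^2"] by (simp add: mult.commute)
    qed
    define h where "h i j = (\<Sum>l<Q. if i \<in> S (Suc l) then (if j \<notin> S (Suc l) then (a l)^2 else 0) else 0)" for i j
    have hnn: "h i j \<ge> 0" for i j unfolding h_def by (intro sum_nonneg) auto
    have hpart: "h i j = (if j \<notin> S (Suc l0) then (a l0)^2 else 0)" if "i \<in> S (Suc l0)" "l0 < Q" for i j l0
      unfolding h_def by (rule collapse[OF that])
    have hnone: "h i j = 0" if "\<forall>l<Q. i \<notin> S (Suc l)" for i j
      unfolding h_def by (rule none[OF that])
    have pt: "(f i - f j)^2 \<le> 2 * h i j + 2 * h j i" for i j
    proof (cases "\<exists>l<Q. i \<in> S (Suc l)")
      case True
      then obtain l0 where l0: "l0 < Q" "i \<in> S (Suc l0)" by blast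
      show ?thesis
      proof (cases "\<exists>l<Q. j \<in> S (Suc l)")
        case True
        then obtain m0 where m0: "m0 < Q" "j \<in> S (Suc m0)" by blast
        show ?thesis
        proof (cases "l0 = m0")
          case True
          then show ?thesis using fpart[OF l0(2,1)] fpart[OF m0(2,1)] hnn[of i j] hnn[of j i] by simp
        next
          case False
          have "j \<notin> S (Suc l0)" "i \<notin> S (Suc m0)" using disjl[OF l0(1) m0(1) False] l0 m0 by auto
          hence "h i j = (a l0)^2" "h j i = (a m0)^2" using hpart[OF l0(2,1)] hpart[OF m0(2,1)] by auto
          moreover have "(a l0 - a m0)^2 \<le> 2 * (a l0)^2 + 2 * (a m0)^2"
            using sum_squares_ge_zero[of "a l0 + a m0" 0] by (simp add: power2_eq_square algebra_simps)
          ultimately show ?thesis using fpart[OF l0(2,1)] fpart[OF m0(2,1)] by simp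
        qed
      next
        case False
        hence "j \<notin> S (Suc l0)" using l0 by auto
        hence "h i j = (a l0)^2" using hpart[OF l0(2,1)] by auto
        moreover have "f j = 0" using fnone False by auto
        ultimately show ?thesis using fpart[OF l0(2,1)] hnn[of j i] by simp
      qed
    next
      case False
      hence fi: "f i = 0" and hi: "h i j = 0" using fnone hnone by auto
      show ?thesis
      proof (cases "\<exists>l<Q. j \<in> S (Suc l)")
        case True
        then obtain m0 where m0: "m0 < Q" "j \<in> S (Suc m0)" by blast
        have "i \<notin> S (Suc m0)" using False m0 by auto
        hence "h j i = (a m0)^2" using hpart[OF m0(2,1)] by auto
        then show ?thesis using fi hi fpart[OF m0(2,1)] by simp
      next
        case False
        then show ?thesis using fi hi fnone hnn[of j i] by auto
      qed
    qed
    have "NUM \<le> (\<Sum>i<n. \<Sum>j<n. (if E i j then 1 else 0) * (2 * h i j + 2 * h j i))"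
      unfolding NUM_def by (intro sum_mono) (auto intro: pt)
    also have "\<dots> = 2 * (\<Sum>i<n. \<Sum>j<n. (if E i j then 1 else 0) * h i j)
                  + 2 * (\<Sum>i<n. \<Sum>j<n. (if E i j then 1 else 0) * h j i)"
      by (simp add: algebra_simps sum.distrib sum_distrib_left)
    also have "(\<Sum>i<n. \<Sum>j<n. (if E i j then 1 else 0) * h j i) = (\<Sum>i<n. \<Sum>j<n. (if E i j then 1 else 0) * h i j)"
      by (subst sum.swap) (simp add: symE)
    also have "(\<Sum>i<n. \<Sum>j<n. (if E i j then 1 else (0::real)) * h i j) = A2"
    proof -
      let ?G = "\<lambda>l i j. (if E i j \<and> i \<in> S (Suc l) \<and> j \<notin> S (Suc l) then 1 else (0::real))"
      have ptw: "(if E i j then 1 else (0::real)) * h i j = (\<Sum>l<Q. (a l)^2 * ?G l i j)" for i j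
      proof -
        have "(if E i j then 1 else (0::real)) * h i j = (\<Sum>l<Q. (if E i j then 1 else 0) *
             (if i \<in> S (Suc l) then (if j \<notin> S (Suc l) then (a l)^2 else 0) else 0))"
          unfolding h_def by (rule sum_distrib_left)
        also have "\<dots> = (\<Sum>l<Q. (a l)^2 * ?G l i j)" by (intro sum.cong refl) simp
        finally show ?thesis .
      qed
      have "(\<Sum>i<n. \<Sum>j<n. (if E i j then 1 else (0::real)) * h i j)
          = (\<Sum>i<n. \<Sum>j<n. \<Sum>l<Q. (a l)^2 * ?G l i j)" by (simp only: ptw)
      also have "\<dots> = (\<Sum>i<n. \<Sum>l<Q. \<Sum>j<n. (a l)^2 * ?G l i j)"
        by (rule sum.cong[OF refl], rule sum.swap)
      also have "\<dots> = (\<Sum>l<Q. \<Sum>i<n. \<Sum>j<n. (a l)^2 * ?G l i j)"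
        by (rule sum.swap)
      also have "\<dots> = (\<Sum>l<Q. (a l)^2)" unfolding A2_def
      proof (rule sum.cong[OF refl])
        fix l assume "l \<in> {..<Q}"
        hence l: "l < Q" by simp
        obtain b ot where bo: "b \<in> S (Suc l)" "ot < n" "ot \<notin> S (Suc l)" "E b ot"
          and uq: "\<And>i j. i < n \<Longrightarrow> j < n \<Longrightarrow> E i j \<Longrightarrow> i \<in> S (Suc l) \<Longrightarrow> j \<notin> S (Suc l) \<Longrightarrow> i = b \<and> j = ot"
          by (rule out_pair[OF graph dangl[OF l]]) blast
        have bn: "b < n" using bo Ssub[OF l] by auto
        have inner: "(\<Sum>j<n. ?G l i j) = (if i = b then 1 else 0)" if i: "i < n" for i
        proof (cases "i = b")
          case True
          have "(\<Sum>j<n. ?G l i j) = (\<Sum>j<n. if j = ot then 1 else 0)"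
          proof (rule sum.cong[OF refl])
            fix j assume "j \<in> {..<n}"
            hence j: "j < n" by simp
            show "?G l i j = (if j = ot then 1 else 0)"
            proof (cases "E i j \<and> i \<in> S (Suc l) \<and> j \<notin> S (Suc l)")
              case c: True
              hence "j = ot" using uq[OF i j] by blast
              thus ?thesis using c by simp
            next
              case c: False
              hence "j \<noteq> ot" using True bo by blast
              thus ?thesis using c by simp
            qed
          qed
          also have "\<dots> = 1" using bo(2) by simp
          finally show ?thesis using True by simp
        next
          case False
          have "(\<Sum>j<n. ?G l i j) = (\<Sum>j<n. 0)"
          proof (rule sum.cong[OF refl])
            fix j assume "j \<in> {..<n}"
            hence j: "j < n" by simp
            show "?G l i j = 0" using uq[OF i j] False by auto
          qed
          thus ?thesis using False by simp
        qed
        have "(\<Sum>i<n. \<Sum>j<n. (a l)^2 * ?G l i j) = (\<Sum>i<n. (a l)^2 * (\<Sum>j<n. ?G l i j))"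
          by (simp only: sum_distrib_left)
        also have "\<dots> = (\<Sum>i<n. (a l)^2 * (if i = b then 1 else 0))"
          by (rule sum.cong[OF refl]) (simp add: inner)
        also have "\<dots> = (\<Sum>i<n. if i = b then (a l)^2 else 0)"
          by (rule sum.cong[OF refl]) simp
        also have "\<dots> = (a l)^2" using bn by simp
        finally show "(\<Sum>i<n. \<Sum>j<n. (a l)^2 * ?G l i j) = (a l)^2" .
      qed
      finally show ?thesis unfolding A2_def .
    qed
    finally have NUMle: "NUM \<le> 4 * A2" by simp
    have q1: "vec n (\<lambda>i. sqrt (degree n E i) * f i) \<bullet> (norm_laplacian n E *\<^sub>v vec n (\<lambda>i. sqrt (degree n E i) * f i)) = DEN - CR"
      unfolding DEN_def CR_def by (rule quad_form(1)[OF dpos])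
    have q2: "vec n (\<lambda>i. sqrt (degree n E i) * f i) \<bullet> vec n (\<lambda>i. sqrt (degree n E i) * f i) = DEN"
      unfolding DEN_def by (rule quad_form(2)[OF dpos])
    have g1: "real g - 1 > 0" using g by simp
    have "c * (2 * real g - 1) > 2" unfolding c_def using g1 g by (simp add: field_simps)
    hence "2 * A2 < c * (2 * real g - 1) * A2" using A2pos by simp
    also have "\<dots> \<le> c * DEN"
    proof -
      have "c > 0" unfolding c_def using g1 by simp
      thus ?thesis using mult_left_mono[OF DENge, of c] by (simp add: mult.assoc)
    qed
    finally have s1: "2 * A2 < c * DEN" .
    have "2 * (DEN - CR) \<le> 4 * A2" unfolding NUMeq[symmetric] by (rule NUMle)
    hence "DEN - CR < c * DEN" using s1 by (rule aux_ineq)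
    thus ?thesis unfolding xeq q1 q2 .
  qed
  have "Q \<le> (\<Sum>x\<in>{x. eigenvalue (norm_laplacian n E) x \<and> x < c}. order x (char_poly (norm_laplacian n E)))"
    by (rule count_eigs[OF lap_carrier lap_sym[OF graph], of Q U]) (rule H)
  hence "real Q \<le> real (\<Sum>x\<in>{x. eigenvalue (norm_laplacian n E) x \<and> x < c}. order x (char_poly (norm_laplacian n E)))"
    by (rule of_nat_mono)
  moreover have "real Q / 2 \<le> real Q" by simp
  ultimately show ?thesis unfolding c_def by (rule order_trans[rotated])
qed


end
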